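(* Fix an algorithm $\mathscr{A}$ run for $T$ rounds on a two-stage causal MDP instance, and an intermediate state $i$ with $m_i\ge1$. Let $Tr_i$ be the expected number of visits to state $i$, let $N_{(a,i)}$ be the expected number of times $\mathscr{A}$ explicitly performs $a$ at state $i$, let $\mathcal{J}_i=\{a\in\mathcal{I}_{m_i}:N_{(a,i)}\le 2Tr_i/m_i\}$, and let $T_{(a,i)}$ be the (random) number of rounds in which intervention $a$ is observed at state $i$. Then for every $a\in\mathcal{J}_i$, $$\mathbb{E}[T_{(a,i)}]\le\frac{3Tr_i}{m_i}.$$
   Context: Two-stage causal MDP: start state $0$, intermediate states $[k]$; at each state $i$ there are independent Bernoulli variables $X^i_1,\dots,X^i_n$ with $q^i_j=\mathbb{P}\{X^i_j=1\}$, drawn afresh each round independently of which state is visited; atomic interventions $\mathcal{I}_i=\{do()\}\cup\{do(X^i_j=0),do(X^i_j=1):j\in[n]\}$, where $do(X^i_j=x)$ sets $X^i_j=x$ and leaves the other variables random. In each of $T$ rounds the algorithm performs an intervention at state $0$, transitions randomly to some intermediate state $i$, and performs one intervention in $\mathcal{I}_i$, observing all $X^i_j$. Intervention $a=do(X^i_j=1)$ is said to be observed at state $i$ in a round if state $i$ is visited and $X^i_j=1$ in that round (whether because $a$ was performed or because the variable took that value naturally). Sorting $q^i_{(1)}\le\dots\le q^i_{(n)}$, $m_i=\max\{j:q^i_{(j)}<1/j\}$ and $\mathcal{I}_{m_i}=\{do(X^i_{(j)}=1):q^i_{(j)}<1/j\}$. Expectations are over the randomness of the instance and the algorithm. *)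

theory Defs
  imports "HOL-Probability.Probability"
begin

text \<open>Interventions at an intermediate state: the empty intervention do(),
  or do(X_j = v) for a variable index j (0-based, j < n).\<close>
datatype interv = Obs | Do nat bool

definition interventions :: "nat \<Rightarrow> interv set" where
  "interventions n = {Obs} \<union> {Do j v | j v. j < n}"

definition apply_int :: "interv \<Rightarrow> (nat \<Rightarrow> bool) \<Rightarrow> (nat \<Rightarrow> bool)" where
  "apply_int a x = (case a of Obs \<Rightarrow> x | Do j v \<Rightarrow> x(j := v))"

text \<open>A round record: intervention at state 0, observation at state 0,
  intermediate state visited, intervention performed there, observed values X^i.\<close>
datatype ('a, 'b) rnd = Rnd (act0: 'a) (obs0: 'b) (st: nat) (act: interv) (xs: "nat \<Rightarrow> bool")

text \<open>Distribution of the history after t rounds.  pol0/pol1 is the (randomised,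
  history dependent) algorithm, tr the (random) transition from state 0.\<close>
fun run :: "nat \<Rightarrow> (nat \<Rightarrow> nat \<Rightarrow> real) \<Rightarrow> (('a,'b) rnd list \<Rightarrow> 'a pmf)
   \<Rightarrow> (('a,'b) rnd list \<Rightarrow> 'a \<Rightarrow> 'b \<Rightarrow> nat \<Rightarrow> interv pmf) \<Rightarrow> ('a \<Rightarrow> ('b \<times> nat) pmf)
   \<Rightarrow> nat \<Rightarrow> ('a,'b) rnd list pmf" where
  "run n q pol0 pol1 tr 0 = return_pmf []"
| "run n q pol0 pol1 tr (Suc t) =
     bind_pmf (run n q pol0 pol1 tr t) (\<lambda>h.
     bind_pmf (pol0 h) (\<lambda>a0.
     bind_pmf (tr a0) (\<lambda>(ob, s).
     bind_pmf (pol1 h a0 ob s) (\<lambda>a.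
     bind_pmf (Pi_pmf {..<n} False (\<lambda>j. bernoulli_pmf (q s j))) (\<lambda>x.
     return_pmf (h @ [Rnd a0 ob s a (apply_int a x)]))))))"

definition visits :: "('a,'b) rnd list \<Rightarrow> nat \<Rightarrow> nat" where
  "visits h s = length (filter (\<lambda>r. st r = s) h)"

definition performed :: "('a,'b) rnd list \<Rightarrow> interv \<Rightarrow> nat \<Rightarrow> nat" where
  "performed h a s = length (filter (\<lambda>r. st r = s \<and> act r = a) h)"

definition observed :: "('a,'b) rnd list \<Rightarrow> interv \<Rightarrow> nat \<Rightarrow> nat" where
  "observed h a s = length (filter (\<lambda>r. st r = s \<and>
       (case a of Obs \<Rightarrow> True | Do j v \<Rightarrow> xs r j = v)) h)"

text \<open>Given a sorting permutation sigma of the indices (position l, 0-based,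
  corresponds to rank l+1), m_i and the set I_{m_i}.\<close>
definition m_idx :: "nat \<Rightarrow> (nat \<Rightarrow> real) \<Rightarrow> (nat \<Rightarrow> nat) \<Rightarrow> nat" where
  "m_idx n qi \<sigma> = Max ({0} \<union> {Suc l | l. l < n \<and> qi (\<sigma> l) < 1 / real (Suc l)})"

definition I_m :: "nat \<Rightarrow> (nat \<Rightarrow> real) \<Rightarrow> (nat \<Rightarrow> nat) \<Rightarrow> interv set" where
  "I_m n qi \<sigma> = {Do (\<sigma> l) True | l. l < n \<and> qi (\<sigma> l) < 1 / real (Suc l)}"

end

theory Submission imports Defs begin

lemma pmf_integrable_bdd:
  fixes g :: "'a \<Rightarrow> real"
  assumes "\<And>y. y \<in> set_pmf M \<Longrightarrow> \<bar>g y\<bar> \<le> B"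
  shows "integrable (measure_pmf M) g"
  by (rule measure_pmf.integrable_const_bound[where B=B]) (auto simp: AE_measure_pmf_iff assms)

lemma pmf_integral_bdd:
  fixes g :: "'a \<Rightarrow> real"
  assumes "\<And>y. y \<in> set_pmf M \<Longrightarrow> \<bar>g y\<bar> \<le> B"
  shows "\<bar>measure_pmf.expectation M g\<bar> \<le> B"
proof -
  have i: "integrable (measure_pmf M) g" by (rule pmf_integrable_bdd[OF assms])
  have "measure_pmf.expectation M g \<le> measure_pmf.expectation M (\<lambda>_. B)"
    using i assms by (intro integral_mono_AE) (auto simp: AE_measure_pmf_iff abs_le_iff)
  moreover have "measure_pmf.expectation M (\<lambda>_. -B) \<le> measure_pmf.expectation M g"
    using i assms by (intro integral_mono_AE) (auto simp: AE_measure_pmf_iff abs_le_iff, fastforce)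
  ultimately show ?thesis by (simp add: abs_le_iff)
qed

lemma pmf_expectation_bind_bdd:
  fixes g :: "'b \<Rightarrow> real"
  assumes B: "\<And>y. y \<in> set_pmf (bind_pmf p f) \<Longrightarrow> \<bar>g y\<bar> \<le> B"
  shows "measure_pmf.expectation (bind_pmf p f) g
       = measure_pmf.expectation p (\<lambda>x. measure_pmf.expectation (f x) g)"
proof -
  define g' where "g' y = (if y \<in> set_pmf (bind_pmf p f) then g y else 0)" for y
  have 1: "measure_pmf.expectation (bind_pmf p f) g = measure_pmf.expectation (bind_pmf p f) g'"
    by (intro integral_cong_AE) (auto simp: AE_measure_pmf_iff g'_def)
  have 2: "measure_pmf.expectation (bind_pmf p f) g' = (\<integral>x. measure_pmf.expectation (f x) g' \<partial>measure_pmf p)"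
    unfolding measure_pmf_bind
    by (rule integral_bind[where K="count_space UNIV" and B="max 0 B" and B'=1])
       (use B in \<open>auto simp: g'_def measurable_measure_pmf measure_pmf.emeasure_space_1
             space_subprob_algebra measure_pmf.subprob_space_axioms set_bind_pmf le_max_iff_disj
             intro: measure_pmf.finite_measure_axioms\<close>)
  have 3: "(\<integral>x. measure_pmf.expectation (f x) g' \<partial>measure_pmf p)
         = measure_pmf.expectation p (\<lambda>x. measure_pmf.expectation (f x) g)"
    by (intro integral_cong_AE)
       (auto simp: AE_measure_pmf_iff g'_def intro!: integral_cong_AE)
  show ?thesis using 1 2 3 by simp
qed

lemma pmf_bind_le:
  fixes g :: "'b \<Rightarrow> real"
  assumes B: "\<And>y. y \<in> set_pmf (bind_pmf p f) \<Longrightarrow> \<bar>g y\<bar> \<le> B"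
    and le: "\<And>x. x \<in> set_pmf p \<Longrightarrow> measure_pmf.expectation (f x) g \<le> c"
  shows "measure_pmf.expectation (bind_pmf p f) g \<le> c"
proof -
  have bx: "\<bar>measure_pmf.expectation (f x) g\<bar> \<le> B" if "x \<in> set_pmf p" for x
    using that B by (intro pmf_integral_bdd) auto
  have "measure_pmf.expectation p (\<lambda>x. measure_pmf.expectation (f x) g) \<le> measure_pmf.expectation p (\<lambda>_. c)"
    using bx le by (intro integral_mono_AE pmf_integrable_bdd) (auto simp: AE_measure_pmf_iff)
  moreover have "measure_pmf.expectation (bind_pmf p f) g
       = measure_pmf.expectation p (\<lambda>x. measure_pmf.expectation (f x) g)"
    by (rule pmf_expectation_bind_bdd[OF B])
  ultimately show ?thesis by simp
qed

lemma pmf_integral_return: "measure_pmf.expectation (return_pmf x) (g :: _ \<Rightarrow> real) = g x"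
  by (simp add: return_pmf.rep_eq integral_return)


definition Dfun :: "real \<Rightarrow> nat \<Rightarrow> nat \<Rightarrow> ('a,'b) rnd list \<Rightarrow> real" where
  "Dfun c j i h = real (observed h (Do j True) i) - real (performed h (Do j True) i) - c * real (visits h i)"

lemma length_run: "h \<in> set_pmf (run n q pol0 pol1 tr t) \<Longrightarrow> length h = t"
  by (induction t arbitrary: h) (auto simp: set_bind_pmf split: prod.splits)

lemma Dfun_bound: "\<bar>Dfun c j i h\<bar> \<le> (2 + \<bar>c\<bar>) * real (length h)"
proof -
  have a: "observed h (Do j True) i \<le> length h" unfolding observed_def by (rule length_filter_le)
  have b: "performed h (Do j True) i \<le> length h" unfolding performed_def by (rule length_filter_le)
  have d: "visits h i \<le> length h" unfolding visits_def by (rule length_filter_le)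
  have "\<bar>c * real (visits h i)\<bar> \<le> \<bar>c\<bar> * real (length h)"
    using d by (simp add: abs_mult mult_left_mono)
  then show ?thesis using a b unfolding Dfun_def by (simp add: algebra_simps abs_le_iff)
qed

lemma Dfun_snoc: "Dfun c j i (h @ [r]) = Dfun c j i h +
   (if st r = i then of_bool (xs r j) - of_bool (act r = Do j True) - c else 0)"
  by (simp add: Dfun_def observed_def performed_def visits_def algebra_simps)

lemma inner_step:
  fixes c :: real
  assumes c: "0 \<le> c" "c \<le> 1" and qc: "s = i \<Longrightarrow> q s j = c" and j: "j < n"
  shows "measure_pmf.expectation (Pi_pmf {..<n} False (\<lambda>j. bernoulli_pmf (q s j)))
     (\<lambda>x. Dfun c j i (h @ [Rnd a0 ob s a (apply_int a x)])) \<le> Dfun c j i h"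
proof (cases "s = i")
  case False
  then show ?thesis by (simp add: Dfun_snoc)
next
  case True
  define G where "G b = Dfun c j i h + (of_bool (if a = Do j True then True else if a = Do j False then False else b)
      - of_bool (a = Do j True) - c)" for b
  have eq: "Dfun c j i (h @ [Rnd a0 ob s a (apply_int a x)]) = G (x j)" for x
    using True by (auto simp: Dfun_snoc G_def apply_int_def split: interv.splits)
  have "measure_pmf.expectation (Pi_pmf {..<n} False (\<lambda>j. bernoulli_pmf (q s j)))
     (\<lambda>x. Dfun c j i (h @ [Rnd a0 ob s a (apply_int a x)]))
     = measure_pmf.expectation (map_pmf (\<lambda>x. x j) (Pi_pmf {..<n} False (\<lambda>j. bernoulli_pmf (q s j)))) G"
    by (simp add: eq)
  also have "\<dots> = measure_pmf.expectation (bernoulli_pmf c) G"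
    using j True qc by (simp add: Pi_pmf_component)
  also have "\<dots> = G True * c + G False * (1 - c)" using c by simp
  also have "\<dots> \<le> Dfun c j i h" using c by (auto simp: G_def algebra_simps)
  finally show ?thesis .
qed

lemma run_step:
  fixes c :: real
  assumes c: "0 \<le> c" "c \<le> 1" and qc: "q i j = c" and j: "j < n"
  shows "measure_pmf.expectation (run n q pol0 pol1 tr t) (Dfun c j i) \<le> 0"
proof (induction t)
  case 0
  then show ?case by (simp add: pmf_integral_return Dfun_def observed_def performed_def visits_def)
next
  case (Suc t)
  define C where "C = (2 + \<bar>c\<bar>) * real (Suc t)"
  have bnd: "\<bar>Dfun c j i y\<bar> \<le> C" if "length y = Suc t" for y :: "('a,'b) rnd list"
    using Dfun_bound[of c j i y] that by (simp add: C_def)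
  define K where "K h = bind_pmf (pol0 h) (\<lambda>a0.
     bind_pmf (tr a0) (\<lambda>(ob, s).
     bind_pmf (pol1 h a0 ob s) (\<lambda>a.
     bind_pmf (Pi_pmf {..<n} False (\<lambda>j. bernoulli_pmf (q s j))) (\<lambda>x.
     return_pmf (h @ [Rnd a0 ob s a (apply_int a x)])))))" for h
  have runS: "run n q pol0 pol1 tr (Suc t) = bind_pmf (run n q pol0 pol1 tr t) K"
    by (simp add: K_def[abs_def])
  have Kle: "measure_pmf.expectation (K h) (Dfun c j i) \<le> Dfun c j i h" if h: "length h = t" for h
    unfolding K_def
  proof (rule pmf_bind_le[where B=C])
    fix a0 assume "a0 \<in> set_pmf (pol0 h)"
    show "measure_pmf.expectation (tr a0 \<bind> (\<lambda>(ob, s). pol1 h a0 ob s \<bind>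
       (\<lambda>a. Pi_pmf {..<n} False (\<lambda>j. bernoulli_pmf (q s j)) \<bind>
       (\<lambda>x. return_pmf (h @ [Rnd a0 ob s a (apply_int a x)]))))) (Dfun c j i) \<le> Dfun c j i h"
    proof (rule pmf_bind_le[where B=C])
      fix obs assume "obs \<in> set_pmf (tr a0)"
      obtain ob s where obs: "obs = (ob, s)" by fastforce
      show "measure_pmf.expectation ((\<lambda>(ob, s). pol1 h a0 ob s \<bind>
       (\<lambda>a. Pi_pmf {..<n} False (\<lambda>j. bernoulli_pmf (q s j)) \<bind>
       (\<lambda>x. return_pmf (h @ [Rnd a0 ob s a (apply_int a x)])))) obs) (Dfun c j i) \<le> Dfun c j i h"
        unfolding obs prod.case
      proof (rule pmf_bind_le[where B=C])
        fix a assume "a \<in> set_pmf (pol1 h a0 ob s)"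
        show "measure_pmf.expectation (Pi_pmf {..<n} False (\<lambda>j. bernoulli_pmf (q s j)) \<bind>
           (\<lambda>x. return_pmf (h @ [Rnd a0 ob s a (apply_int a x)]))) (Dfun c j i) \<le> Dfun c j i h"
        proof -
          have "measure_pmf.expectation (Pi_pmf {..<n} False (\<lambda>j. bernoulli_pmf (q s j)) \<bind>
           (\<lambda>x. return_pmf (h @ [Rnd a0 ob s a (apply_int a x)]))) (Dfun c j i)
            = measure_pmf.expectation (Pi_pmf {..<n} False (\<lambda>j. bernoulli_pmf (q s j)))
               (\<lambda>x. measure_pmf.expectation (return_pmf (h @ [Rnd a0 ob s a (apply_int a x)])) (Dfun c j i))"
            by (rule pmf_expectation_bind_bdd[where B=C]) (auto simp: h intro!: bnd)
          also have "\<dots> = measure_pmf.expectation (Pi_pmf {..<n} False (\<lambda>j. bernoulli_pmf (q s j)))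
               (\<lambda>x. Dfun c j i (h @ [Rnd a0 ob s a (apply_int a x)]))"
            by (simp add: pmf_integral_return)
          also have "\<dots> \<le> Dfun c j i h"
            by (rule inner_step) (use c qc j in auto)
          finally show ?thesis .
        qed
      qed (auto simp: h set_bind_pmf intro!: bnd)
    qed (auto simp: h set_bind_pmf intro!: bnd split: prod.splits)
  qed (auto simp: h set_bind_pmf intro!: bnd split: prod.splits)
  have "measure_pmf.expectation (run n q pol0 pol1 tr (Suc t)) (Dfun c j i)
     = measure_pmf.expectation (run n q pol0 pol1 tr t) (\<lambda>h. measure_pmf.expectation (K h) (Dfun c j i))"
    unfolding runS
    by (rule pmf_expectation_bind_bdd[where B=C])
       (metis bnd length_run runS)
  also have "\<dots> \<le> measure_pmf.expectation (run n q pol0 pol1 tr t) (Dfun c j i)"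
  proof (rule integral_mono_AE)
    show "integrable (measure_pmf (run n q pol0 pol1 tr t)) (\<lambda>h. measure_pmf.expectation (K h) (Dfun c j i))"
    proof (rule pmf_integrable_bdd[where B=C])
      fix h assume h: "h \<in> set_pmf (run n q pol0 pol1 tr t)"
      show "\<bar>measure_pmf.expectation (K h) (Dfun c j i)\<bar> \<le> C"
      proof (rule pmf_integral_bdd)
        fix y assume "y \<in> set_pmf (K h)"
        then have "y \<in> set_pmf (run n q pol0 pol1 tr (Suc t))"
          unfolding runS set_bind_pmf using h by blast
        then show "\<bar>Dfun c j i y\<bar> \<le> C" using bnd length_run by blast
      qed
    qed
    show "integrable (measure_pmf (run n q pol0 pol1 tr t)) (Dfun c j i)"
      by (rule pmf_integrable_bdd[where B="(2 + \<bar>c\<bar>) * real t"])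
         (metis Dfun_bound length_run)
    show "AE h in measure_pmf (run n q pol0 pol1 tr t). measure_pmf.expectation (K h) (Dfun c j i) \<le> Dfun c j i h"
      by (auto simp: AE_measure_pmf_iff intro!: Kle length_run)
  qed
  also have "\<dots> \<le> 0" by (rule Suc.IH)
  finally show ?case .
qed


theorem proposition2:
  fixes n k T i :: nat
    and q :: "nat \<Rightarrow> nat \<Rightarrow> real"
    and pol0 :: "('a,'b) rnd list \<Rightarrow> 'a pmf"
    and pol1 :: "('a,'b) rnd list \<Rightarrow> 'a \<Rightarrow> 'b \<Rightarrow> nat \<Rightarrow> interv pmf"
    and tr :: "'a \<Rightarrow> ('b \<times> nat) pmf"
    and \<sigma> :: "nat \<Rightarrow> nat"
    and a :: interv
  assumes q_range: "\<And>s j. s \<in> {1..k} \<Longrightarrow> j < n \<Longrightarrow> 0 \<le> q s j \<and> q s j \<le> 1"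
    and trans_range: "\<And>a0. set_pmf (tr a0) \<subseteq> UNIV \<times> {1..k}"
    and pol1_range: "\<And>h a0 ob s. set_pmf (pol1 h a0 ob s) \<subseteq> interventions n"
    and i_state: "i \<in> {1..k}"
    and sort_bij: "bij_betw \<sigma> {..<n} {..<n}"
    and sort_mono: "\<And>l1 l2. l1 \<le> l2 \<Longrightarrow> l2 < n \<Longrightarrow> q i (\<sigma> l1) \<le> q i (\<sigma> l2)"
    and m_pos: "m_idx n (q i) \<sigma> \<ge> 1"
    and a_in_J: "a \<in> I_m n (q i) \<sigma>"
      "measure_pmf.expectation (run n q pol0 pol1 tr T) (\<lambda>h. real (performed h a i))
         \<le> 2 * measure_pmf.expectation (run n q pol0 pol1 tr T) (\<lambda>h. real (visits h i))
             / real (m_idx n (q i) \<sigma>)"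
  shows "measure_pmf.expectation (run n q pol0 pol1 tr T) (\<lambda>h. real (observed h a i))
         \<le> 3 * measure_pmf.expectation (run n q pol0 pol1 tr T) (\<lambda>h. real (visits h i))
             / real (m_idx n (q i) \<sigma>)"
proof -
  obtain l where l: "a = Do (\<sigma> l) True" "l < n" "q i (\<sigma> l) < 1 / real (Suc l)"
    using a_in_J(1) unfolding I_m_def by blast
  define j where "j = \<sigma> l"
  define c where "c = q i j"
  define m where "m = m_idx n (q i) \<sigma>"
  have j: "j < n" using sort_bij l(2) unfolding j_def by (meson bij_betwE lessThan_iff)
  have c01: "0 \<le> c" "c \<le> 1" using q_range[OF i_state j] by (auto simp: c_def)
  define S where "S = {Suc l | l. l < n \<and> q i (\<sigma> l) < 1 / real (Suc l)}"
  have finS: "finite ({0} \<union> S)"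
    by (rule finite_subset[of _ "{..n}"]) (auto simp: S_def)
  have mdef: "m = Max ({0} \<union> S)" unfolding m_def m_idx_def S_def by simp
  have "m \<in> {0} \<union> S" unfolding mdef using finS by (intro Max_in) auto
  with m_pos obtain l' where l': "m = Suc l'" "l' < n" "q i (\<sigma> l') < 1 / real (Suc l')"
    unfolding m_def[symmetric] S_def by auto
  have "Suc l \<le> m" unfolding mdef using finS l by (intro Max_ge) (auto simp: S_def)
  then have "l \<le> l'" using l' by simp
  then have "c \<le> q i (\<sigma> l')" unfolding c_def j_def using sort_mono l'(2) by blast
  then have cm: "c \<le> 1 / real m" using l' by simp
  have mpos: "real m > 0" using m_pos m_def by simp
  let ?M = "run n q pol0 pol1 tr T"
  have len: "h \<in> set_pmf ?M \<Longrightarrow> length h = T" for h by (rule length_run)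
  have io: "integrable (measure_pmf ?M) (\<lambda>h. real (observed h a i))"
    by (rule pmf_integrable_bdd[where B="real T"])
       (auto simp: observed_def dest!: len intro: order.trans[OF length_filter_le])
  have ip: "integrable (measure_pmf ?M) (\<lambda>h. real (performed h a i))"
    by (rule pmf_integrable_bdd[where B="real T"])
       (auto simp: performed_def dest!: len intro: order.trans[OF length_filter_le])
  have iv: "integrable (measure_pmf ?M) (\<lambda>h. real (visits h i))"
    by (rule pmf_integrable_bdd[where B="real T"])
       (auto simp: visits_def dest!: len intro: order.trans[OF length_filter_le])
  have "measure_pmf.expectation ?M (Dfun c j i) \<le> 0"
    by (rule run_step) (use c01 j in \<open>auto simp: c_def\<close>)
  moreover have "measure_pmf.expectation ?M (Dfun c j i) =
     measure_pmf.expectation ?M (\<lambda>h. real (observed h a i))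
     - measure_pmf.expectation ?M (\<lambda>h. real (performed h a i))
     - c * measure_pmf.expectation ?M (\<lambda>h. real (visits h i))"
    unfolding Dfun_def l(1) j_def[symmetric] using io ip iv unfolding l(1) j_def[symmetric]
    by (simp add: integral_diff Bochner_Integration.integral_mult_right)
  ultimately have A: "measure_pmf.expectation ?M (\<lambda>h. real (observed h a i))
     \<le> measure_pmf.expectation ?M (\<lambda>h. real (performed h a i))
     + c * measure_pmf.expectation ?M (\<lambda>h. real (visits h i))" by linarith
  have V0: "measure_pmf.expectation ?M (\<lambda>h. real (visits h i)) \<ge> 0" by simp
  have "c * measure_pmf.expectation ?M (\<lambda>h. real (visits h i))
     \<le> 1 / real m * measure_pmf.expectation ?M (\<lambda>h. real (visits h i))"
    using cm V0 by (rule mult_right_mono)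
  then show ?thesis using A a_in_J(2) unfolding m_def[symmetric] by (simp add: field_simps)
qed

end
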